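(* There is an Abelian torsion group $G$ with a proper invariant metric $d_G$ such that $\operatorname{l\text{-}asdim}(G,d_G)=0$ and $\operatorname{asdim}_{AN}(G,d_G)=\infty$.
   Context: For a metric space $X$: $\operatorname{asdim}_{AN}(X)\le n$ iff there are $b,c\ge0$ such that for every $r>0$ there are families $\mathcal U_1,\dots,\mathcal U_{n+1}$ of subsets covering $X$, each $r$-disjoint (points in different members of the same family at distance $\ge r$), with members of diameter $\le cr+b$; $\operatorname{asdim}_{AN}(X)=\infty$ if no such $n$ exists. $\operatorname{l\text{-}asdim}(X)\le n$ iff there are $c>0$ and an unbounded set $U\subset\mathbb R_+$ such that for every $r\in U$ there are families $\mathcal U_1,\dots,\mathcal U_{n+1}$ covering $X$, each $r$-disjoint, with members of diameter $\le cr$. A metric on a group is invariant if $d(g+x,g+y)=d(x,y)$; proper means bounded sets are finite. *)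

theory Defs
  imports "HOL-Analysis.Abstract_Metric_Spaces" "HOL-Algebra.Group"
begin

definition r_disjoint :: "('a \<Rightarrow> 'a \<Rightarrow> real) \<Rightarrow> real \<Rightarrow> 'a set set \<Rightarrow> bool" where
  "r_disjoint d r \<U> \<longleftrightarrow>
     (\<forall>A\<in>\<U>. \<forall>B\<in>\<U>. A \<noteq> B \<longrightarrow> (\<forall>x\<in>A. \<forall>y\<in>B. d x y \<ge> r))"

definition diam_bounded :: "('a \<Rightarrow> 'a \<Rightarrow> real) \<Rightarrow> real \<Rightarrow> 'a set set \<Rightarrow> bool" where
  "diam_bounded d D \<U> \<longleftrightarrow> (\<forall>A\<in>\<U>. \<forall>x\<in>A. \<forall>y\<in>A. d x y \<le> D)"

definition good_cover :: "'a set \<Rightarrow> ('a \<Rightarrow> 'a \<Rightarrow> real) \<Rightarrow> nat \<Rightarrow> real \<Rightarrow> real \<Rightarrow> bool" where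
  "good_cover X d n r D \<longleftrightarrow>
     (\<exists>\<U> :: nat \<Rightarrow> 'a set set.
        (\<forall>i\<le>n. \<forall>A\<in>\<U> i. A \<subseteq> X) \<and>
        X \<subseteq> (\<Union>i\<le>n. \<Union>(\<U> i)) \<and>
        (\<forall>i\<le>n. r_disjoint d r (\<U> i)) \<and>
        (\<forall>i\<le>n. diam_bounded d D (\<U> i)))"

definition asdim_AN_le :: "'a set \<Rightarrow> ('a \<Rightarrow> 'a \<Rightarrow> real) \<Rightarrow> nat \<Rightarrow> bool" where
  "asdim_AN_le X d n \<longleftrightarrow>
     (\<exists>b c. b \<ge> 0 \<and> c \<ge> 0 \<and> (\<forall>r>0. good_cover X d n r (c * r + b)))"

definition asdim_AN_infinite :: "'a set \<Rightarrow> ('a \<Rightarrow> 'a \<Rightarrow> real) \<Rightarrow> bool" where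
  "asdim_AN_infinite X d \<longleftrightarrow> (\<forall>n. \<not> asdim_AN_le X d n)"

definition l_asdim_le :: "'a set \<Rightarrow> ('a \<Rightarrow> 'a \<Rightarrow> real) \<Rightarrow> nat \<Rightarrow> bool" where
  "l_asdim_le X d n \<longleftrightarrow>
     (\<exists>c U. c > 0 \<and> U \<subseteq> {0..} \<and> (\<forall>M. \<exists>r\<in>U. r > M) \<and>
        (\<forall>r\<in>U. good_cover X d n r (c * r)))"

definition torsion_group :: "('a, 'b) monoid_scheme \<Rightarrow> bool" where
  "torsion_group G \<longleftrightarrow> (\<forall>x\<in>carrier G. \<exists>n::nat. n > 0 \<and> x [^]\<^bsub>G\<^esub> n = \<one>\<^bsub>G\<^esub>)"

definition invariant_metric :: "('a, 'b) monoid_scheme \<Rightarrow> ('a \<Rightarrow> 'a \<Rightarrow> real) \<Rightarrow> bool" where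
  "invariant_metric G d \<longleftrightarrow>
     (\<forall>g\<in>carrier G. \<forall>x\<in>carrier G. \<forall>y\<in>carrier G. d (g \<otimes>\<^bsub>G\<^esub> x) (g \<otimes>\<^bsub>G\<^esub> y) = d x y)"

definition proper_metric :: "'a set \<Rightarrow> ('a \<Rightarrow> 'a \<Rightarrow> real) \<Rightarrow> bool" where
  "proper_metric X d \<longleftrightarrow> (\<forall>S\<subseteq>X. Metric_space.mbounded X d S \<longrightarrow> finite S)"

end

theory Submission
  imports Defs "HOL-Library.Nat_Bijection"
begin

definition tdec :: "nat \<Rightarrow> nat \<times> nat \<times> nat" where
  "tdec e = (fst (prod_decode e), prod_decode (snd (prod_decode e)))"
definition tenc :: "nat \<times> nat \<times> nat \<Rightarrow> nat" where
  "tenc t = prod_encode (fst t, prod_encode (snd t))"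

lemma tdec_tenc[simp]: "tdec (tenc t) = t"
  by (simp add: tdec_def tenc_def)
lemma tenc_tdec[simp]: "tenc (tdec e) = e"
  by (simp add: tdec_def tenc_def)

definition dec :: "nat \<Rightarrow> (nat \<times> nat \<times> nat) set" where
  "dec x = tdec ` set_decode x"
definition enc :: "(nat \<times> nat \<times> nat) set \<Rightarrow> nat" where
  "enc S = set_encode (tenc ` S)"

lemma finite_dec[simp]: "finite (dec x)"
  by (simp add: dec_def)

lemma enc_dec[simp]: "enc (dec x) = x"
proof -
  have "tenc ` tdec ` set_decode x = set_decode x"
    by (simp add: image_image)
  then show ?thesis by (simp add: enc_def dec_def)
qed

lemma dec_enc[simp]: "finite S \<Longrightarrow> dec (enc S) = S"
  by (simp add: enc_def dec_def image_image)

lemma dec_inj: "dec x = dec y \<Longrightarrow> x = y"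
  by (metis enc_dec)

lemma dec_0[simp]: "dec 0 = {}"
  by (simp add: dec_def)

definition sdf :: "'a set \<Rightarrow> 'a set \<Rightarrow> 'a set" where
  "sdf A B = (A - B) \<union> (B - A)"

definition Bits :: "(nat \<times> nat \<times> nat) set" where
  "Bits = {(j,a,b). a < j \<and> b < j}"

definition GG :: "nat monoid" where
  "GG = \<lparr>carrier = {x. dec x \<subseteq> Bits}, mult = (\<lambda>x y. enc (sdf (dec x) (dec y))), one = 0\<rparr>"

lemma GG_simps[simp]: "carrier GG = {x. dec x \<subseteq> Bits}" "mult GG x y = enc (sdf (dec x) (dec y))"
  "one GG = 0"
  by (simp_all add: GG_def)

lemma finite_sdf[simp]: "finite A \<Longrightarrow> finite B \<Longrightarrow> finite (sdf A B)"
  by (simp add: sdf_def)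

lemma sdf_assoc: "sdf (sdf A B) C = sdf A (sdf B C)"
  by (auto simp: sdf_def)
lemma sdf_comm: "sdf A B = sdf B A"
  by (auto simp: sdf_def)

lemma comm_GG: "comm_group GG"
proof (rule comm_groupI)
  show "\<exists>y\<in>carrier GG. y \<otimes>\<^bsub>GG\<^esub> x = \<one>\<^bsub>GG\<^esub>" if "x \<in> carrier GG" for x
    using that by (intro bexI[of _ x]) (auto simp: sdf_def enc_def)
next
  fix x y z assume "x \<in> carrier GG" "y \<in> carrier GG" "z \<in> carrier GG"
  then show "x \<otimes>\<^bsub>GG\<^esub> y \<otimes>\<^bsub>GG\<^esub> z = x \<otimes>\<^bsub>GG\<^esub> (y \<otimes>\<^bsub>GG\<^esub> z)"
    by (simp add: sdf_assoc)
next
  fix x y assume "x \<in> carrier GG" "y \<in> carrier GG"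
  then show "x \<otimes>\<^bsub>GG\<^esub> y = y \<otimes>\<^bsub>GG\<^esub> x"
    by (simp add: sdf_comm[of "dec x"])
qed (auto simp: sdf_def)

definition cells :: "(nat \<times> nat \<times> nat) set \<Rightarrow> (nat \<times> nat) set" where
  "cells S = (\<lambda>(j,a,b). (j,a)) ` S"

definition w :: "(nat \<times> nat \<times> nat) set \<Rightarrow> real" where
  "w S = (\<Sum>(j,a)\<in>cells S. fact j)"

definition dd :: "nat \<Rightarrow> nat \<Rightarrow> real" where
  "dd x y = w (sdf (dec x) (dec y))"

lemma finite_cells[simp]: "finite S \<Longrightarrow> finite (cells S)"
  by (simp add: cells_def)

lemma w_nonneg: "0 \<le> w S"
  unfolding w_def by (rule sum_nonneg) auto

lemma cells_mono: "A \<subseteq> B \<Longrightarrow> cells A \<subseteq> cells B"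
  unfolding cells_def by (rule image_mono)

lemma cells_Un: "cells (A \<union> B) = cells A \<union> cells B"
  unfolding cells_def by (rule image_Un)

lemma w_mono: "A \<subseteq> B \<Longrightarrow> finite B \<Longrightarrow> w A \<le> w B"
  unfolding w_def by (rule sum_mono2) (simp_all add: cells_mono fact_ge_zero case_prod_beta)

lemma w_Un: "finite A \<Longrightarrow> finite B \<Longrightarrow> w (A \<union> B) \<le> w A + w B"
proof -
  assume f: "finite A" "finite B"
  have "w (A \<union> B) = (\<Sum>(j,a)\<in>cells A \<union> cells B. fact j)" by (simp add: w_def cells_Un)
  also have "\<dots> = w A + w B - (\<Sum>(j,a)\<in>cells A \<inter> cells B. fact j)"
    unfolding w_def by (rule sum_Un) (use f in auto)
  also have "\<dots> \<le> w A + w B"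
    by (smt (verit) sum_nonneg case_prod_beta fact_ge_zero)
  finally show ?thesis .
qed

lemma w_zero: "finite S \<Longrightarrow> w S = 0 \<longleftrightarrow> S = {}"
proof -
  assume f: "finite S"
  have "w S = 0 \<longleftrightarrow> (\<forall>p\<in>cells S. (case p of (j,a) \<Rightarrow> (fact j::real)) = 0)"
    unfolding w_def by (rule sum_nonneg_eq_0_iff) (use f in auto)
  also have "\<dots> \<longleftrightarrow> cells S = {}" by auto
  also have "\<dots> \<longleftrightarrow> S = {}" by (auto simp: cells_def)
  finally show ?thesis .
qed

lemma sdf_tri: "sdf A C \<subseteq> sdf A B \<union> sdf B C"
  by (auto simp: sdf_def)

lemma metric_dd: "Metric_space (carrier GG) dd"
proof
  fix x y z
  show "0 \<le> dd x y" by (simp add: dd_def w_nonneg)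
  show "dd x y = dd y x" by (simp add: dd_def sdf_comm)
  show "dd x y = 0 \<longleftrightarrow> x = y"
    by (auto simp: dd_def w_zero sdf_def intro: dec_inj)
  have "dd x z \<le> w (sdf (dec x) (dec y) \<union> sdf (dec y) (dec z))"
    unfolding dd_def by (rule w_mono[OF sdf_tri]) auto
  also have "\<dots> \<le> dd x y + dd y z" unfolding dd_def by (rule w_Un) auto
  finally show "dd x z \<le> dd x y + dd y z" .
qed

lemma inv_dd: "invariant_metric GG dd"
  unfolding invariant_metric_def
  by (auto simp: dd_def sdf_def intro!: arg_cong[where f=w])

lemma sdf_self: "sdf A A = {}" by (auto simp: sdf_def)
lemma sdf_empty: "sdf {} A = A" by (auto simp: sdf_def)
lemma enc_empty[simp]: "enc {} = 0" by (simp add: enc_def)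

lemma torsion_GG: "torsion_group GG"
  unfolding torsion_group_def
proof
  fix x assume "x \<in> carrier GG"
  have "x [^]\<^bsub>GG\<^esub> (2::nat) = \<one>\<^bsub>GG\<^esub>"
    by (simp add: numeral_2_eq_2 sdf_self sdf_empty)
  then show "\<exists>n::nat. n > 0 \<and> x [^]\<^bsub>GG\<^esub> n = \<one>\<^bsub>GG\<^esub>" by (intro exI[of _ 2]) auto
qed

lemma fact_le_w: "(j,a,b) \<in> S \<Longrightarrow> finite S \<Longrightarrow> fact j \<le> w S"
proof -
  assume h: "(j,a,b) \<in> S" "finite S"
  have "(j,a) \<in> cells S" using h by (force simp: cells_def)
  then have "(case (j,a) of (j,a) \<Rightarrow> (fact j::real)) \<le> w S"
    unfolding w_def by (rule member_le_sum) (use h in auto)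
  then show ?thesis by simp
qed

lemma sdf_sdf: "sdf A (sdf A B) = B" by (auto simp: sdf_def)

lemma proper_dd: "proper_metric (carrier GG) dd"
  unfolding proper_metric_def
proof (intro allI impI)
  fix S assume SX: "S \<subseteq> carrier GG" and mb: "Metric_space.mbounded (carrier GG) dd S"
  then obtain x B where xB: "S \<subseteq> Metric_space.mcball (carrier GG) dd x B"
    using Metric_space.mbounded_def[OF metric_dd] by blast
  define N where "N = nat \<lceil>B\<rceil>"
  define F where "F = {..N} \<times> {..N} \<times> {..N}"
  have "S \<subseteq> (\<lambda>T. enc (sdf (dec x) T)) ` Pow F"
  proof
    fix y assume y: "y \<in> S"
    then have xy: "dec x \<subseteq> Bits" "dec y \<subseteq> Bits" "dd x y \<le> B"
      using xB Metric_space.mcball_def[OF metric_dd] by auto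
    have "sdf (dec x) (dec y) \<subseteq> F"
    proof
      fix t assume t: "t \<in> sdf (dec x) (dec y)"
      obtain j a b where tj: "t = (j,a,b)" by (cases t) auto
      have "t \<in> Bits" using t xy by (auto simp: sdf_def)
      then have ab: "a < j" "b < j" by (auto simp: Bits_def tj)
      have "fact j \<le> dd x y" unfolding dd_def using t tj by (intro fact_le_w) auto
      then have "real j \<le> B" using xy fact_ge_self[of j]
        by (smt (verit) of_nat_fact of_nat_le_iff)
      then have "j \<le> N" unfolding N_def by linarith
      then show "t \<in> F" using ab tj F_def by auto
    qed
    moreover have "y = enc (sdf (dec x) (sdf (dec x) (dec y)))" by (simp add: sdf_sdf)
    ultimately show "y \<in> (\<lambda>T. enc (sdf (dec x) T)) ` Pow F" by blast
  qed
  moreover have "finite F" unfolding F_def by auto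
  ultimately show "finite S" by (meson finite_Pow_iff finite_imageI finite_subset)
qed



lemma sum_fact_le: "(\<Sum>j\<le>J. real j * fact j) \<le> fact (Suc J)"
proof (induction J)
  case 0 then show ?case by simp
next
  case (Suc J)
  have "(\<Sum>j\<le>Suc J. real j * fact j) = (\<Sum>j\<le>J. real j * fact j) + real (Suc J) * fact (Suc J)"
    by simp
  also have "\<dots> \<le> fact (Suc J) + real (Suc J) * fact (Suc J)" using Suc by simp
  also have "\<dots> = fact (Suc (Suc J))" by (simp add: algebra_simps)
  finally show ?case .
qed

lemma w_low: assumes "S \<subseteq> Bits" "\<forall>t\<in>S. fst t \<le> J" "finite S"
  shows "w S \<le> fact (Suc J)"
proof -
  have "cells S \<subseteq> Sigma {..J} (\<lambda>j. {..<j})"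
    using assms(1,2) by (force simp: cells_def Bits_def)
  then have "w S \<le> (\<Sum>(j,a)\<in>Sigma {..J} (\<lambda>j. {..<j}). fact j)"
    unfolding w_def by (intro sum_mono2) auto
  also have "\<dots> = (\<Sum>j\<le>J. \<Sum>a<j. fact j)"
    by (subst sum.Sigma) auto
  also have "\<dots> = (\<Sum>j\<le>J. real j * fact j)" by simp
  also have "\<dots> \<le> fact (Suc J)" by (rule sum_fact_le)
  finally show ?thesis .
qed

definition hi :: "nat \<Rightarrow> (nat \<times> nat \<times> nat) set \<Rightarrow> (nat \<times> nat \<times> nat) set" where
  "hi J S = {t\<in>S. fst t > J}"

definition cosJ :: "nat \<Rightarrow> nat \<Rightarrow> nat set" where
  "cosJ J x = {y \<in> carrier GG. hi J (dec y) = hi J (dec x)}"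

lemma good_cover_J: "good_cover (carrier GG) dd 0 (fact (Suc J)) (1 * fact (Suc J))"
  unfolding good_cover_def
proof (intro exI[of _ "\<lambda>i. cosJ J ` carrier GG"] conjI allI impI ballI)
  show "A \<subseteq> carrier GG" if "A \<in> cosJ J ` carrier GG" for A using that by (auto simp: cosJ_def)
  show "carrier GG \<subseteq> (\<Union>i\<le>(0::nat). \<Union> (cosJ J ` carrier GG))"
  proof
    fix x assume x: "x \<in> carrier GG"
    then have "x \<in> cosJ J x" by (simp add: cosJ_def)
    have hx: "x \<in> \<Union> (cosJ J ` carrier GG)" using x \<open>x \<in> cosJ J x\<close> by (intro UnionI[of "cosJ J x"]) auto
    show "x \<in> (\<Union>i\<le>(0::nat). \<Union> (cosJ J ` carrier GG))" by (rule UN_I[of "0::nat" "{..0::nat}"]) (simp, rule hx)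
  qed
  show "r_disjoint dd (fact (Suc J)) (cosJ J ` carrier GG)"
    unfolding r_disjoint_def
  proof (intro ballI impI)
    fix A B y y' assume A: "A \<in> cosJ J ` carrier GG" and B: "B \<in> cosJ J ` carrier GG"
      and AB: "A \<noteq> B" and y: "y \<in> A" and y': "y' \<in> B"
    obtain x x' where "A = cosJ J x" "B = cosJ J x'" using A B by auto
    then have hx: "hi J (dec y) = hi J (dec x)" "hi J (dec y') = hi J (dec x')" "A = cosJ J x" "B = cosJ J x'"
      using y y' by (auto simp: cosJ_def)
    have "hi J (dec y) \<noteq> hi J (dec y')"
    proof
      assume "hi J (dec y) = hi J (dec y')"
      then have "hi J (dec x) = hi J (dec x')" using hx by simp
      then have "A = B" using hx by (simp add: cosJ_def)
      then show False using AB by simp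
    qed
    then obtain t where t: "t \<in> sdf (dec y) (dec y')" "fst t > J"
      by (auto simp: hi_def sdf_def)
    obtain j a b where tj: "t = (j,a,b)" by (cases t) auto
    have "fact (Suc J) \<le> (fact j :: real)" using t tj by (intro fact_mono) auto
    also have "\<dots> \<le> dd y y'" unfolding dd_def using t tj by (intro fact_le_w) auto
    finally show "fact (Suc J) \<le> dd y y'" .
  qed
  show "diam_bounded dd (1 * fact (Suc J)) (cosJ J ` carrier GG)"
    unfolding diam_bounded_def
  proof (intro ballI)
    fix A y y' assume A: "A \<in> cosJ J ` carrier GG" and y: "y \<in> A" and y': "y' \<in> A"
    then obtain x where "A = cosJ J x" by auto
    then have h: "hi J (dec y) = hi J (dec y')" "dec y \<subseteq> Bits" "dec y' \<subseteq> Bits"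
      using y y' by (auto simp: cosJ_def)
    have "\<forall>t\<in>sdf (dec y) (dec y'). fst t \<le> J"
    proof
      fix t assume t: "t \<in> sdf (dec y) (dec y')"
      show "fst t \<le> J"
      proof (rule ccontr)
        assume "\<not> fst t \<le> J"
        then have "t \<in> hi J (dec y) \<longleftrightarrow> t \<in> dec y" "t \<in> hi J (dec y') \<longleftrightarrow> t \<in> dec y'"
          by (auto simp: hi_def)
        then show False using h(1) t by (auto simp: sdf_def)
      qed
    qed
    moreover have "sdf (dec y) (dec y') \<subseteq> Bits" using h by (auto simp: sdf_def)
    ultimately show "dd y y' \<le> 1 * fact (Suc J)" unfolding dd_def using w_low by simp
  qed
qed

lemma l_asdim_GG: "l_asdim_le (carrier GG) dd 0"
proof -
  let ?U = "range (\<lambda>J. fact (Suc J) :: real)"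
  have A: "?U \<subseteq> {0..}" by auto
  have B: "\<forall>M. \<exists>r\<in>?U. r > M"
  proof
    fix M :: real
    obtain J :: nat where "M < real J" using reals_Archimedean2 by blast
    moreover have "Suc J \<le> fact (Suc J)" by (rule fact_ge_self)
    then have "real (Suc J) \<le> real (fact (Suc J))" by (simp only: of_nat_le_iff)
    then have "real J \<le> fact (Suc J)" by (simp only: of_nat_fact)
    ultimately have "M < fact (Suc J)" by linarith
    then show "\<exists>r\<in>?U. M < r" by (intro bexI[of _ "fact (Suc J)"]) auto
  qed
  have C: "\<forall>r\<in>?U. good_cover (carrier GG) dd 0 r (1 * r)"
    using good_cover_J by auto
  show ?thesis unfolding l_asdim_le_def
    by (rule exI[of _ 1], rule exI[of _ ?U]) (use A B C in simp)
qed

lemma count_lemma: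
  fixes U :: "'x set" and Sx :: "'x \<Rightarrow> nat set" and proj :: "nat \<Rightarrow> 'x \<Rightarrow> 'y"
  assumes fU: "finite U" and Ssub: "\<forall>x\<in>U. Sx x \<subseteq> {..<m}" and Scard: "\<forall>x\<in>U. real (card (Sx x)) \<le> D"
    and inj: "\<forall>a<m. inj_on (proj a) {x\<in>U. a \<notin> Sx x}"
    and img: "\<forall>a<m. proj a ` U \<subseteq> P a" and fP: "\<forall>a<m. finite (P a) \<and> card (P a) \<le> K"
  shows "real (card U) * (real m - D) \<le> real m * real K"
proof -
  have 1: "card {x\<in>U. a \<notin> Sx x} \<le> K" if a: "a < m" for a
  proof -
    have "card {x\<in>U. a \<notin> Sx x} = card (proj a ` {x\<in>U. a \<notin> Sx x})"
      using inj a by (simp add: card_image)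
    also have "\<dots> \<le> card (P a)" using img fP a by (intro card_mono) auto
    also have "\<dots> \<le> K" using fP a by auto
    finally show ?thesis .
  qed
  have 2: "(\<Sum>a<m. card {x\<in>U. a \<notin> Sx x}) = (\<Sum>x\<in>U. card {a\<in>{..<m}. a \<notin> Sx x})"
  proof -
    have "(\<Sum>a<m. card {x\<in>U. a \<notin> Sx x}) = (\<Sum>a<m. \<Sum>x\<in>U. if a \<notin> Sx x then 1 else 0)"
      using fU by (intro sum.cong refl) (subst sum.inter_filter[symmetric], simp_all)
    also have "\<dots> = (\<Sum>x\<in>U. \<Sum>a<m. if a \<notin> Sx x then 1 else 0)" by (rule sum.swap)
    also have "\<dots> = (\<Sum>x\<in>U. card {a\<in>{..<m}. a \<notin> Sx x})"
      by (intro sum.cong refl) (subst sum.inter_filter[symmetric], simp_all)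
    finally show ?thesis .
  qed
  have 3: "real (card {a\<in>{..<m}. a \<notin> Sx x}) \<ge> real m - D" if x: "x \<in> U" for x
  proof -
    have "{a\<in>{..<m}. a \<notin> Sx x} = {..<m} - Sx x" by auto
    then have "card {a\<in>{..<m}. a \<notin> Sx x} = m - card (Sx x)"
      using Ssub x by (simp add: card_Diff_subset[of "Sx x" "{..<m}"] finite_subset[of "Sx x" "{..<m}"])
    moreover have "card (Sx x) \<le> card {..<m}" using Ssub x by (intro card_mono) auto
    then have "card (Sx x) \<le> m" by simp
    ultimately show ?thesis using Scard x by simp
  qed
  have "real (card U) * (real m - D) = (\<Sum>x\<in>U. real m - D)" by simp
  also have "\<dots> \<le> (\<Sum>x\<in>U. real (card {a\<in>{..<m}. a \<notin> Sx x}))"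
    using 3 by (intro sum_mono) auto
  also have "\<dots> = real (\<Sum>a<m. card {x\<in>U. a \<notin> Sx x})" using 2 by simp
  also have "\<dots> = (\<Sum>a<m. real (card {x\<in>U. a \<notin> Sx x}))" by simp
  also have "\<dots> \<le> (\<Sum>a<m. real K)" using 1 by (intro sum_mono) auto
  also have "\<dots> = real m * real K" by simp
  finally show ?thesis .
qed

lemma w_block: assumes "\<forall>t\<in>S. fst t = j"
  shows "w S = real (card {a. \<exists>b. (j,a,b)\<in>S}) * fact j"
proof -
  have ce: "cells S = (\<lambda>a. (j,a)) ` {a. \<exists>b. (j,a,b)\<in>S}"
    using assms by (force simp: cells_def image_iff)
  have "w S = (\<Sum>p\<in>(\<lambda>a. (j,a)) ` {a. \<exists>b. (j,a,b)\<in>S}. case p of (j,a) \<Rightarrow> (fact j::real))"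
    unfolding w_def ce by simp
  also have "\<dots> = (\<Sum>a\<in>{a. \<exists>b. (j,a,b)\<in>S}. (fact j::real))"
    by (subst sum.reindex) (auto simp: inj_on_def)
  also have "\<dots> = real (card {a. \<exists>b. (j,a,b)\<in>S}) * fact j" by simp
  finally show ?thesis .
qed

definition Bj :: "nat \<Rightarrow> (nat \<times> nat \<times> nat) set" where
  "Bj j = {j} \<times> {..<j} \<times> {..<j}"

definition Bja :: "nat \<Rightarrow> nat \<Rightarrow> (nat \<times> nat \<times> nat) set" where
  "Bja j a = {j} \<times> ({..<j} - {a}) \<times> {..<j}"

lemma finite_Bj[simp]: "finite (Bj j)" by (simp add: Bj_def)

lemma dec_Y: "x \<in> enc ` Pow (Bj j) \<Longrightarrow> dec x \<subseteq> Bj j"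
proof -
  assume "x \<in> enc ` Pow (Bj j)"
  then obtain T where "T \<subseteq> Bj j" "x = enc T" by auto
  moreover have "finite T" using \<open>T \<subseteq> Bj j\<close> by (rule finite_subset) simp
  ultimately show ?thesis by simp
qed

lemma color_bound:
  fixes U :: "nat set set" and j :: nat and c b :: real
  assumes j1: "j \<ge> 1" and c0: "c \<ge> 0" and b0: "b \<ge> 0"
    and disj: "r_disjoint dd (2*fact j) U"
    and diam: "diam_bounded dd (c*(2*fact j)+b) U"
    and jbig: "real j \<ge> 2*(2*c+b)"
  shows "real (card (enc ` Pow (Bj j) \<inter> \<Union>U)) \<le> 2 * 2^((j-1)*j)"
proof -
  define Y where "Y = enc ` Pow (Bj j)"
  define V where "V = Y \<inter> \<Union>U"
  define mem where "mem x = (SOME A. A \<in> U \<and> x \<in> A)" for x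
  define ctr where "ctr A = (SOME z. z \<in> A \<inter> Y)" for A
  define Sx where "Sx x = {a. \<exists>b. (j,a,b) \<in> sdf (dec x) (dec (ctr (mem x)))}" for x
  define proj where "proj a x = {t\<in>dec x. fst (snd t) \<noteq> a}" for a x
  define K where "K = (2::nat)^((j-1)*j)"
  have lam1: "(1::real) \<le> fact j" by simp
  have memx: "mem x \<in> U \<and> x \<in> mem x" if "x \<in> V" for x
  proof -
    have "\<exists>A. A \<in> U \<and> x \<in> A" using that by (auto simp: V_def)
    then show ?thesis unfolding mem_def by (rule someI_ex)
  qed
  have ctrx: "ctr (mem x) \<in> mem x \<inter> Y" if "x \<in> V" for x
  proof -
    have "\<exists>z. z \<in> mem x \<inter> Y" using memx[OF that] that by (auto simp: V_def)
    then show ?thesis unfolding ctr_def by (rule someI_ex)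
  qed
  have VY: "dec x \<subseteq> Bj j" if "x \<in> V" for x
    using that dec_Y by (auto simp: V_def Y_def)
  have CY: "dec (ctr (mem x)) \<subseteq> Bj j" if "x \<in> V" for x
    using ctrx[OF that] dec_Y by (auto simp: Y_def)
  have fj: "\<forall>t\<in>sdf (dec x) (dec y). fst t = j" if "dec x \<subseteq> Bj j" "dec y \<subseteq> Bj j" for x y
    using that by (auto simp: sdf_def Bj_def)
  have Ssub: "\<forall>x\<in>V. Sx x \<subseteq> {..<j}"
  proof
    fix x assume x: "x \<in> V"
    show "Sx x \<subseteq> {..<j}"
      using VY[OF x] CY[OF x] by (auto simp: Sx_def sdf_def Bj_def)
  qed
  have Scard: "\<forall>x\<in>V. real (card (Sx x)) \<le> 2*c+b"
  proof
    fix x assume x: "x \<in> V"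
    have "dd x (ctr (mem x)) = real (card (Sx x)) * fact j"
      unfolding dd_def Sx_def using fj[OF VY[OF x] CY[OF x]] by (rule w_block)
    moreover have "dd x (ctr (mem x)) \<le> c*(2*fact j)+b"
    proof -
      have "mem x \<in> U" "x \<in> mem x" "ctr (mem x) \<in> mem x" using memx[OF x] ctrx[OF x] by auto
      then show ?thesis using diam unfolding diam_bounded_def by blast
    qed
    moreover have "b*1 \<le> b * fact j" by (rule mult_left_mono[OF lam1 b0])
    ultimately have "real (card (Sx x)) * fact j \<le> 2*c*fact j + b * fact j"
      by simp
    then have "real (card (Sx x)) * fact j \<le> (2*c+b) * fact j" by (simp add: algebra_simps)
    then show "real (card (Sx x)) \<le> 2*c+b" using lam1 by simp
  qed
  have inj: "\<forall>a<j. inj_on (proj a) {x\<in>V. a \<notin> Sx x}"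
  proof (intro allI impI inj_onI)
    fix a x y assume a: "a < j" and x: "x \<in> {x\<in>V. a \<notin> Sx x}" and y: "y \<in> {x\<in>V. a \<notin> Sx x}"
      and pe: "proj a x = proj a y"
    have xV: "x \<in> V" and yV: "y \<in> V" using x y by auto
    have cellx: "\<forall>b. (j,a,b) \<in> dec x \<longleftrightarrow> (j,a,b) \<in> dec (ctr (mem x))"
      using x by (auto simp: Sx_def sdf_def)
    have celly: "\<forall>b. (j,a,b) \<in> dec y \<longleftrightarrow> (j,a,b) \<in> dec (ctr (mem y))"
      using y by (auto simp: Sx_def sdf_def)
    have sd: "sdf (dec x) (dec y) \<subseteq> {t. fst (snd t) = a}"
    proof
      fix t assume t: "t \<in> sdf (dec x) (dec y)"
      show "t \<in> {t. fst (snd t) = a}"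
      proof (rule ccontr)
        assume "t \<notin> {t. fst (snd t) = a}"
        then have "t \<in> dec x \<longleftrightarrow> t \<in> proj a x" "t \<in> dec y \<longleftrightarrow> t \<in> proj a y"
          by (auto simp: proj_def)
        then show False using t pe by (auto simp: sdf_def)
      qed
    qed
    have "mem x = mem y"
    proof (rule ccontr)
      assume ne: "mem x \<noteq> mem y"
      then have "2*fact j \<le> dd x y"
      proof -
        have "mem x \<in> U" "mem y \<in> U" "x \<in> mem x" "y \<in> mem y" using memx[OF xV] memx[OF yV] by auto
        then show ?thesis using disj ne unfolding r_disjoint_def by blast
      qed
      moreover have "dd x y = real (card {a'. \<exists>b. (j,a',b)\<in>sdf (dec x) (dec y)}) * fact j"
        unfolding dd_def using fj[OF VY[OF xV] VY[OF yV]] by (rule w_block)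
      moreover have "{a'. \<exists>b. (j,a',b)\<in>sdf (dec x) (dec y)} \<subseteq> {a}" using sd by auto
      then have "card {a'. \<exists>b. (j,a',b)\<in>sdf (dec x) (dec y)} \<le> card {a}"
        by (rule card_mono[rotated]) simp
      then have "real (card {a'. \<exists>b. (j,a',b)\<in>sdf (dec x) (dec y)}) \<le> 1" by simp
      then have "real (card {a'. \<exists>b. (j,a',b)\<in>sdf (dec x) (dec y)}) * fact j \<le> 1 * fact j"
        by (rule mult_right_mono) simp
      ultimately have "2*fact j \<le> 1 * (fact j::real)"
        by linarith
      then show False using lam1 by simp
    qed
    then have cl: "\<forall>b. (j,a,b) \<in> dec x \<longleftrightarrow> (j,a,b) \<in> dec y" using cellx celly by simp
    have fx: "\<forall>t\<in>dec x. fst t = j" and fy: "\<forall>t\<in>dec y. fst t = j"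
      using VY[OF xV] VY[OF yV] by (auto simp: Bj_def)
    have "dec x = dec y"
    proof -
      have "t \<in> dec x \<longleftrightarrow> t \<in> dec y" for t
      proof -
      obtain j' a' b' where tt: "t = (j',a',b')" by (cases t) auto
      show "t \<in> dec x \<longleftrightarrow> t \<in> dec y"
      proof (cases "a' = a")
        case True
        then show ?thesis using cl fx fy tt by fastforce
      next
        case False
        then have "t \<in> dec x \<longleftrightarrow> t \<in> proj a x" "t \<in> dec y \<longleftrightarrow> t \<in> proj a y"
          using tt by (auto simp: proj_def)
        then show ?thesis using pe by simp
      qed
      qed
      then show ?thesis by blast
    qed
    then show "x = y" by (rule dec_inj)
  qed
  have img: "\<forall>a<j. proj a ` V \<subseteq> Pow (Bja j a)"
    using VY by (auto simp: proj_def Bj_def Bja_def)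
  have fP: "\<forall>a<j. finite (Pow (Bja j a)) \<and> card (Pow (Bja j a)) \<le> K"
  proof (intro allI impI conjI)
    fix a assume a: "a < j"
    show "finite (Pow (Bja j a))" by (simp add: Bja_def)
    have "card ({..<j} - {a}) = j - 1" using a by simp
    moreover have "card (Bja j a) = card ({..<j} - {a}) * j" by (simp add: Bja_def card_cartesian_product)
    ultimately have "card (Bja j a) = (j-1)*j" by simp
    moreover have "finite (Bja j a)" by (simp add: Bja_def)
    ultimately show "card (Pow (Bja j a)) \<le> K" by (simp add: card_Pow K_def)
  qed
  have fV: "finite V" by (simp add: V_def Y_def)
  have main: "real (card V) * (real j - (2*c+b)) \<le> real j * real K"
    by (rule count_lemma[OF fV Ssub Scard inj img fP])
  have "real j - (2*c+b) \<ge> real j / 2" using jbig by simp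
  then have "real (card V) * (real j / 2) \<le> real j * real K"
  proof -
    have "real (card V) * (real j / 2) \<le> real (card V) * (real j - (2*c+b))"
      by (rule mult_left_mono) (use \<open>real j - (2*c+b) \<ge> real j / 2\<close> in simp_all)
    then show ?thesis using main by linarith
  qed
  then have "real (card V) \<le> 2 * real K" using j1 by (simp add: field_simps)
  then show ?thesis by (simp add: V_def Y_def K_def)
qed

lemma not_AN: "\<not> asdim_AN_le (carrier GG) dd n"
proof
  assume "asdim_AN_le (carrier GG) dd n"
  then obtain b c where b0: "b \<ge> 0" and c0: "c \<ge> 0"
    and H: "\<forall>r>0. good_cover (carrier GG) dd n r (c * r + b)"
    unfolding asdim_AN_le_def by blast
  define j where "j = nat \<lceil>2*(2*c+b)\<rceil> + 2*n + 3"
  have j1: "j \<ge> 1" by (simp add: j_def)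
  have jbig: "real j \<ge> 2*(2*c+b)"
  proof -
    have "2*(2*c+b) \<le> real (nat \<lceil>2*(2*c+b)\<rceil>)" by (rule real_nat_ceiling_ge)
    then show ?thesis by (simp add: j_def)
  qed
  have "(0::real) < 2 * fact j" by simp
  then have "good_cover (carrier GG) dd n (2 * fact j) (c * (2 * fact j) + b)" using H by blast
  then have ex: "\<exists>UU :: nat \<Rightarrow> nat set set. (\<forall>i\<le>n. \<forall>A\<in>UU i. A \<subseteq> carrier GG) \<and>
        carrier GG \<subseteq> (\<Union>i\<le>n. \<Union>(UU i)) \<and>
        (\<forall>i\<le>n. r_disjoint dd (2 * fact j) (UU i)) \<and>
        (\<forall>i\<le>n. diam_bounded dd (c * (2 * fact j) + b) (UU i))"
    unfolding good_cover_def .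
  define UU where "UU = (SOME UU :: nat \<Rightarrow> nat set set. (\<forall>i\<le>n. \<forall>A\<in>UU i. A \<subseteq> carrier GG) \<and>
        carrier GG \<subseteq> (\<Union>i\<le>n. \<Union>(UU i)) \<and>
        (\<forall>i\<le>n. r_disjoint dd (2 * fact j) (UU i)) \<and>
        (\<forall>i\<le>n. diam_bounded dd (c * (2 * fact j) + b) (UU i)))"
  have PU: "(\<forall>i\<le>n. \<forall>A\<in>UU i. A \<subseteq> carrier GG) \<and>
        carrier GG \<subseteq> (\<Union>i\<le>n. \<Union>(UU i)) \<and>
        (\<forall>i\<le>n. r_disjoint dd (2 * fact j) (UU i)) \<and>
        (\<forall>i\<le>n. diam_bounded dd (c * (2 * fact j) + b) (UU i))"
    unfolding UU_def by (rule someI_ex[OF ex])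
  note cov = conjunct1[OF conjunct2[OF PU]]
  note disj = conjunct1[OF conjunct2[OF conjunct2[OF PU]]]
  note diam = conjunct2[OF conjunct2[OF conjunct2[OF PU]]]
  define Y where "Y = enc ` Pow (Bj j)"
  define K where "K = (2::nat)^((j-1)*j)"
  have fY: "finite Y" by (simp add: Y_def)
  have YX: "Y \<subseteq> carrier GG"
  proof
    fix x assume "x \<in> Y"
    then have "dec x \<subseteq> Bj j" using dec_Y by (simp add: Y_def)
    then show "x \<in> carrier GG" by (auto simp: Bj_def Bits_def)
  qed
  have Ysub: "Y \<subseteq> (\<Union>i\<le>n. Y \<inter> \<Union>(UU i))"
  proof
    fix x assume xY: "x \<in> Y"
    have "x \<in> (\<Union>i\<le>n. \<Union>(UU i))" by (rule subsetD[OF cov subsetD[OF YX xY]])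
    then obtain i where i: "i \<in> {..n}" "x \<in> \<Union>(UU i)" by (rule UN_E)
    have xi: "x \<in> Y \<inter> \<Union>(UU i)" using xY i(2) by (rule IntI)
    show "x \<in> (\<Union>i\<le>n. Y \<inter> \<Union>(UU i))" by (rule UN_I[where B="\<lambda>i. Y \<inter> \<Union>(UU i)", OF i(1) xi])
  qed
  have "card Y \<le> card (\<Union>i\<le>n. Y \<inter> \<Union>(UU i))"
    by (rule card_mono[OF _ Ysub]) (use fY in auto)
  also have "\<dots> \<le> (\<Sum>i\<le>n. card (Y \<inter> \<Union>(UU i)))" by (rule card_UN_le) simp
  finally have "real (card Y) \<le> real (\<Sum>i\<le>n. card (Y \<inter> \<Union>(UU i)))"
    by (simp only: of_nat_le_iff)
  also have "\<dots> = (\<Sum>i\<le>n. real (card (Y \<inter> \<Union>(UU i))))" by (rule of_nat_sum)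
  also have "\<dots> \<le> (\<Sum>i\<le>n. 2 * real K)"
  proof (rule sum_mono)
    fix i assume "i \<in> {..n}"
    then have "real (card (enc ` Pow (Bj j) \<inter> \<Union>(UU i))) \<le> 2 * 2^((j-1)*j)"
      using disj diam by (intro color_bound[OF j1 c0 b0 _ _ jbig]) auto
    then show "real (card (Y \<inter> \<Union>(UU i))) \<le> 2 * real K" by (simp add: Y_def K_def)
  qed
  also have "\<dots> = real (n+1) * 2 * real K" by simp
  finally have le: "real (card Y) \<le> real (n+1) * 2 * real K" .
  have "inj_on enc (Pow (Bj j))"
  proof (rule inj_onI)
    fix S T assume "S \<in> Pow (Bj j)" "T \<in> Pow (Bj j)" "enc S = enc T"
    moreover have "finite S" "finite T" using \<open>S \<in> Pow (Bj j)\<close> \<open>T \<in> Pow (Bj j)\<close>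
      by (auto intro: finite_subset[OF _ finite_Bj])
    ultimately have "dec (enc S) = dec (enc T)" "finite S" "finite T" by simp_all
    then show "S = T" by (simp only: dec_enc)
  qed
  then have "card Y = card (Pow (Bj j))" by (simp add: Y_def card_image)
  also have "\<dots> = 2 ^ card (Bj j)" by (simp add: card_Pow)
  also have "card (Bj j) = j * j" by (simp add: Bj_def card_cartesian_product)
  also have "j * j = j + (j-1)*j" using j1 by (cases j) auto
  finally have "card Y = 2^j * K" by (simp add: K_def power_add)
  with le have "real (2^j) * real K \<le> real (2*(n+1)) * real K" by (simp add: algebra_simps)
  moreover have "K > 0" by (simp add: K_def)
  ultimately have "real (2^j) \<le> real (2*(n+1))" by simp
  then have "2^j \<le> 2*(n+1)" by (simp only: of_nat_le_iff)
  moreover have "j < 2^j" by (rule less_exp)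
  moreover have "2*(n+1) < j" unfolding j_def by simp
  ultimately show False by linarith
qed

theorem mainTheorem17:
  shows "\<exists>(G :: nat monoid) (d :: nat \<Rightarrow> nat \<Rightarrow> real).
           comm_group G \<and> torsion_group G \<and>
           Metric_space (carrier G) d \<and> invariant_metric G d \<and> proper_metric (carrier G) d \<and>
           l_asdim_le (carrier G) d 0 \<and> asdim_AN_infinite (carrier G) d"
  apply (rule exI[of _ GG], rule exI[of _ dd])
  using comm_GG torsion_GG metric_dd inv_dd proper_dd l_asdim_GG not_AN
  by (simp add: asdim_AN_infinite_def)

end
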